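(* Let $\tilde\varepsilon_0:\mathbb R\to\mathbb R$ be any function supported in $[\frac43\delta^{\frac1{2i_1}},\frac53\delta^{\frac1{2i_1}}]$, and let $u_0(x)=\sum_{l=1}^L\delta^{\frac1{2i_l}}\Psi_{i_l}\big((x-y_{l,0})\delta^{-\alpha_l}\big)+\tilde\varepsilon_0(x)$. Then $h_l=u_0(y_{l,0})-u_0(0)$ for every $l$, and: $h_l<0$ for $2\le l\le L$; $h_{l+1}<h_l$ for $2\le l\le L-1$; and there is a constant $C$ independent of $\delta$ such that for all sufficiently small $\delta>0$ and all $2\le l\le L$, $$|h_l|\le C\,\delta^{\frac{1}{2i_m(2i_m+1)}}.$$
   Context: For a positive integer $i$, $\Psi_i:\mathbb R\to\mathbb R$ denotes the odd, strictly decreasing, analytic solution of $-\frac{1}{2i}\Psi_i+\frac{2i+1}{2i}X\Psi_i'(X)+\Psi_i(X)\Psi_i'(X)=0$ satisfying $\Psi_i(X)=-X+X^{2i+1}+O(X^{4i+1})$ as $X\to0$. It satisfies $\Psi_i(X)=-\operatorname{sgn}(X)|X|^{\frac1{2i+1}}+\operatorname{sgn}(X)\frac{|X|^{-1+\frac{2}{2i+1}}}{2i+1}+O(|X|^{-2+\frac{3}{2i+1}})$ as $|X|\to\infty$, and $|\Psi_i(X)|\approx |X|(1+|X|)^{\frac1{2i+1}-1}$ for all $X$. Fix an integer $L\ge2$ and positive integers $i_1,\dots,i_L$; let $i_m=\max_l i_l$ and $\alpha_l=1+\frac1{2i_l}$. Let $\delta\in(0,1)$. For $l=1,\dots,L$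 put $y_{l,0}=3(l-1)\delta^{1/(2i_1)}$ and $h_l=\sum_{l'=1}^L\delta^{\frac1{2i_{l'}}}\Big(\Psi_{i_{l'}}\big(\tfrac{y_{l,0}-y_{l',0}}{\delta^{\alpha_{l'}}}\big)-\Psi_{i_{l'}}\big(\tfrac{-y_{l',0}}{\delta^{\alpha_{l'}}}\big)\Big)$. Here $A\approx B$ means $C^{-1}B\le A\le CB$ with $C$ independent of $X$. *)

theory Defs
  imports "HOL-Analysis.Analysis" "HOL-Library.Landau_Symbols"
begin

definition real_analytic :: "(real \<Rightarrow> real) \<Rightarrow> bool" where
  "real_analytic f \<longleftrightarrow>
     (\<forall>x. \<exists>r>0. \<exists>c::nat \<Rightarrow> real. \<forall>y. \<bar>y - x\<bar> < r \<longrightarrow> (\<lambda>n. c n * (y - x) ^ n) sums f y)"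

text \<open>The profile \<open>\<Psi>_k\<close>: the odd, strictly decreasing, analytic solution of
  \<open>-1/(2k) \<Psi> + (2k+1)/(2k) X \<Psi>' + \<Psi> \<Psi>' = 0\<close> with \<open>\<Psi>(X) = -X + X^(2k+1) + O(X^(4k+1))\<close>
  at 0, together with the properties of it recorded in the paper (behaviour at infinity and
  the global two-sided size bound).\<close>
definition is_Psi :: "nat \<Rightarrow> (real \<Rightarrow> real) \<Rightarrow> bool" where
  "is_Psi k f \<longleftrightarrow>
     (\<forall>X. f (- X) = - f X) \<and>
     (\<forall>X Y. X < Y \<longrightarrow> f Y < f X) \<and>
     real_analytic f \<and>
     (\<forall>X. f differentiable (at X)) \<and>
     (\<forall>X. - (1 / (2 * real k)) * f X + (2 * real k + 1) / (2 * real k) * X * deriv f X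
            + f X * deriv f X = 0) \<and>
     (\<lambda>X. f X - (- X + X ^ (2 * k + 1))) \<in> O[at (0::real)](\<lambda>X. X ^ (4 * k + 1)) \<and>
     (\<lambda>X. f X - (- sgn X * \<bar>X\<bar> powr (1 / (2 * real k + 1))
                  + sgn X * \<bar>X\<bar> powr (-1 + 2 / (2 * real k + 1)) / (2 * real k + 1)))
       \<in> O[at_infinity](\<lambda>X. \<bar>X\<bar> powr (-2 + 3 / (2 * real k + 1))) \<and>
     (\<exists>C>0. \<forall>X. (1 / C) * (\<bar>X\<bar> * (1 + \<bar>X\<bar>) powr (1 / (2 * real k + 1) - 1)) \<le> \<bar>f X\<bar> \<and>
                 \<bar>f X\<bar> \<le> C * (\<bar>X\<bar> * (1 + \<bar>X\<bar>) powr (1 / (2 * real k + 1) - 1)))"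

definition alpha :: "(nat \<Rightarrow> nat) \<Rightarrow> nat \<Rightarrow> real" where
  "alpha i l = 1 + 1 / (2 * real (i l))"

definition ypos :: "(nat \<Rightarrow> nat) \<Rightarrow> real \<Rightarrow> nat \<Rightarrow> real" where
  "ypos i \<delta> l = 3 * (real l - 1) * \<delta> powr (1 / (2 * real (i 1)))"

definition hval :: "(nat \<Rightarrow> real \<Rightarrow> real) \<Rightarrow> (nat \<Rightarrow> nat) \<Rightarrow> nat \<Rightarrow> real \<Rightarrow> nat \<Rightarrow> real" where
  "hval Psi i L \<delta> l =
     (\<Sum>l'=1..L. \<delta> powr (1 / (2 * real (i l'))) *
        (Psi (i l') ((ypos i \<delta> l - ypos i \<delta> l') / \<delta> powr (alpha i l'))
         - Psi (i l') (- ypos i \<delta> l' / \<delta> powr (alpha i l'))))"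

definition u0 :: "(nat \<Rightarrow> real \<Rightarrow> real) \<Rightarrow> (nat \<Rightarrow> nat) \<Rightarrow> nat \<Rightarrow> real \<Rightarrow> (real \<Rightarrow> real) \<Rightarrow> real \<Rightarrow> real" where
  "u0 Psi i L \<delta> eps x =
     (\<Sum>l=1..L. \<delta> powr (1 / (2 * real (i l))) *
        Psi (i l) ((x - ypos i \<delta> l) * \<delta> powr (- alpha i l))) + eps x"

end

theory Submission imports Defs begin

lemma psi_pow_bound:
  assumes "is_Psi k f"
  shows "\<exists>C>0. \<forall>X. \<bar>f X\<bar> \<le> C * \<bar>X\<bar> powr (1 / (2 * real k + 1))"
proof -
  let ?p = "1 / (2 * real k + 1)"
  from assms obtain C where C: "C > 0" "\<And>X. \<bar>f X\<bar> \<le> C * (\<bar>X\<bar> * (1 + \<bar>X\<bar>) powr (?p - 1))"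
    unfolding is_Psi_def by blast
  have p: "0 < ?p" "?p \<le> 1" by (auto simp: field_simps)
  have "\<bar>f X\<bar> \<le> C * \<bar>X\<bar> powr ?p" for X
  proof (cases "X = 0")
    case True
    then show ?thesis using C(2)[of X] by simp
  next
    case False
    then have ax: "\<bar>X\<bar> > 0" by simp
    have "(1 + \<bar>X\<bar>) powr (?p - 1) \<le> \<bar>X\<bar> powr (?p - 1)"
      by (rule powr_mono2') (use p ax in auto)
    then have "\<bar>X\<bar> * (1 + \<bar>X\<bar>) powr (?p - 1) \<le> \<bar>X\<bar> * \<bar>X\<bar> powr (?p - 1)"
      using ax by (simp add: mult_left_mono)
    also have "\<dots> = \<bar>X\<bar> powr ?p"
      using ax by (simp add: powr_diff)
    finally show ?thesis using C by (meson mult_left_mono order_trans less_imp_le)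
  qed
  then show ?thesis using C(1) by blast
qed

lemma term_bound:
  fixes f :: "real \<Rightarrow> real" and k j m :: nat
  assumes fb: "\<And>X. \<bar>f X\<bar> \<le> C * \<bar>X\<bar> powr (1 / (2 * real k + 1))" and C: "C > 0"
    and d: "0 < \<delta>" "\<delta> < 1" and ab: "\<bar>a\<bar> \<le> M" "\<bar>b\<bar> \<le> M" and M: "1 \<le> M"
    and jk: "0 < j" "j \<le> m" "0 < k" "k \<le> m"
  shows "\<bar>\<delta> powr (1 / (2 * real k)) *
           (f (a * \<delta> powr (1 / (2 * real j)) / \<delta> powr (1 + 1 / (2 * real k)))
          - f (b * \<delta> powr (1 / (2 * real j)) / \<delta> powr (1 + 1 / (2 * real k))))\<bar>
         \<le> 2 * C * M * \<delta> powr (1 / (2 * real m * (2 * real m + 1)))"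
proof -
  define p where "p = 1 / (2 * real k + 1)"
  define Q where "Q = \<delta> powr (1 / (2 * real j)) / \<delta> powr (1 + 1 / (2 * real k))"
  have p: "0 < p" "p \<le> 1" using jk by (auto simp: p_def field_simps)
  have Q: "Q > 0" using d by (simp add: Q_def)
  have Qp: "Q powr p = \<delta> powr (p * (1 / (2 * real j) - (1 + 1 / (2 * real k))))"
    using d by (simp add: Q_def powr_diff[symmetric] powr_powr mult.commute)
  have ex: "1 / (2 * real k) + p * (1 / (2 * real j) - (1 + 1 / (2 * real k)))
      = 1 / (2 * real j * (2 * real k + 1))"
  proof -
    have *: "x > 0 \<Longrightarrow> y > 0 \<Longrightarrow> 1 / (2 * y) + 1 / (2 * y + 1) * (1 / (2 * x) - (1 + 1 / (2 * y)))
      = 1 / (2 * x * (2 * y + 1))" for x y :: real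
    proof -
      assume xy: "x > 0" "y > 0"
      then have "2 * y + 1 \<noteq> 0" "2*x \<noteq> 0" "2*y \<noteq> 0" by auto
      have e: "1 / (2 * y) = 1 / (2 * y + 1) * (1 + 1 / (2 * y))"
        using xy by (simp add: field_simps)
      have e2: "1 / (2 * y + 1) * (1 / (2 * x)) = 1 / (2 * x * (2 * y + 1))"
        by simp
      show ?thesis by (subst e) (simp add: algebra_simps e2 del: times_divide_eq_right)
    qed
    show ?thesis unfolding p_def using jk by (intro *) auto
  qed
  have exle: "1 / (2 * real m * (2 * real m + 1)) \<le> 1 / (2 * real j * (2 * real k + 1))"
    using jk by (intro divide_left_mono mult_mono) auto
  have one: "\<bar>f (c * Q)\<bar> \<le> C * M * Q powr p" if "\<bar>c\<bar> \<le> M" for c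
  proof -
    have "\<bar>c * Q\<bar> powr p \<le> (M * Q) powr p"
      using that Q p by (intro powr_mono2) (auto simp: abs_mult mult_right_mono)
    also have "\<dots> = M powr p * Q powr p" using M Q by (simp add: powr_mult)
    also have "\<dots> \<le> M * Q powr p"
    proof -
      have "M powr p \<le> M powr 1" using M p by (intro powr_mono) auto
      then show ?thesis using M by (intro mult_right_mono) auto
    qed
    finally show ?thesis using fb[of "c * Q"] C p_def
      by (smt (verit, best) mult_left_mono mult.assoc)
  qed
  have "\<bar>\<delta> powr (1 / (2 * real k)) * (f (a * Q) - f (b * Q))\<bar>
      \<le> \<delta> powr (1 / (2 * real k)) * (2 * C * M * Q powr p)"
    using one[OF ab(1)] one[OF ab(2)] d by (simp add: abs_mult)
  also have "\<dots> = 2 * C * M * \<delta> powr (1 / (2 * real j * (2 * real k + 1)))"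
    by (simp add: Qp powr_add[symmetric] ex)
  also have "\<dots> \<le> 2 * C * M * \<delta> powr (1 / (2 * real m * (2 * real m + 1)))"
    using d C M exle by (intro mult_left_mono powr_mono') auto
  finally show ?thesis by (simp add: Q_def mult.assoc)
qed

theorem lemma2p1:
  fixes Psi :: "nat \<Rightarrow> real \<Rightarrow> real" and i :: "nat \<Rightarrow> nat" and L :: nat
  assumes hPsi: "\<And>k. 0 < k \<Longrightarrow> is_Psi k (Psi k)"
    and hL: "2 \<le> L"
    and hi: "\<And>l. l \<in> {1..L} \<Longrightarrow> 0 < i l"
  shows "(\<forall>\<delta> eps. 0 < \<delta> \<and> \<delta> < 1 \<and>
            (\<forall>x. x \<notin> {4/3 * \<delta> powr (1 / (2 * real (i 1))) .. 5/3 * \<delta> powr (1 / (2 * real (i 1)))}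
                 \<longrightarrow> eps x = 0) \<longrightarrow>
            (\<forall>l\<in>{1..L}. hval Psi i L \<delta> l = u0 Psi i L \<delta> eps (ypos i \<delta> l) - u0 Psi i L \<delta> eps 0) \<and>
            (\<forall>l\<in>{2..L}. hval Psi i L \<delta> l < 0) \<and>
            (\<forall>l\<in>{2..L-1}. hval Psi i L \<delta> (l + 1) < hval Psi i L \<delta> l))
       \<and> (\<exists>C. \<forall>\<^sub>F \<delta> in at_right 0. \<forall>l\<in>{2..L}.
            \<bar>hval Psi i L \<delta> l\<bar>
              \<le> C * \<delta> powr (1 / (2 * real (Max (i ` {1..L})) * (2 * real (Max (i ` {1..L})) + 1))))"
proof -
  define m where "m = Max (i ` {1..L})"
  have fin: "finite {1..L}" by simp
  have iin: "\<And>l. l \<in> {1..L} \<Longrightarrow> i l \<le> m" unfolding m_def by (intro Max_ge) auto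
  have i1: "0 < i 1" "i 1 \<le> m" using hL hi iin by auto
  have dec: "\<And>k X Y. 0 < k \<Longrightarrow> X < Y \<Longrightarrow> Psi k Y < Psi k X"
    using hPsi unfolding is_Psi_def by blast
  define Cf where "Cf k = (SOME C. C > 0 \<and> (\<forall>X. \<bar>Psi k X\<bar> \<le> C * \<bar>X\<bar> powr (1 / (2 * real k + 1))))" for k
  have Cf: "Cf k > 0" "\<And>X. \<bar>Psi k X\<bar> \<le> Cf k * \<bar>X\<bar> powr (1 / (2 * real k + 1))" if "0 < k" for k
  proof -
    from psi_pow_bound[OF hPsi[OF that]] have "\<exists>C. C > 0 \<and> (\<forall>X. \<bar>Psi k X\<bar> \<le> C * \<bar>X\<bar> powr (1 / (2 * real k + 1)))" by blast
    from someI_ex[OF this] show "Cf k > 0" "\<And>X. \<bar>Psi k X\<bar> \<le> Cf k * \<bar>X\<bar> powr (1 / (2 * real k + 1))"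
      unfolding Cf_def by blast+
  qed
  have part1: "(\<forall>l\<in>{1..L}. hval Psi i L \<delta> l = u0 Psi i L \<delta> eps (ypos i \<delta> l) - u0 Psi i L \<delta> eps 0) \<and>
            (\<forall>l\<in>{2..L}. hval Psi i L \<delta> l < 0) \<and>
            (\<forall>l\<in>{2..L-1}. hval Psi i L \<delta> (l + 1) < hval Psi i L \<delta> l)"
    if d: "0 < \<delta>" "\<delta> < 1" and eps: "\<forall>x. x \<notin> {4/3 * \<delta> powr (1 / (2 * real (i 1))) .. 5/3 * \<delta> powr (1 / (2 * real (i 1)))}
                 \<longrightarrow> eps x = 0" for \<delta> eps
  proof (intro conjI ballI)
    define D where "D = \<delta> powr (1 / (2 * real (i 1)))"
    have D: "D > 0" using d by (simp add: D_def)
    have yp: "ypos i \<delta> l = 3 * (real l - 1) * D" for l by (simp add: ypos_def D_def)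
    have Q: "\<delta> powr (alpha i l') > 0" for l' using d by simp
    have epsz: "eps 0 = 0"
    proof -
      have "(0::real) \<notin> {4/3*D..5/3*D}" using D by auto
      then show ?thesis using eps unfolding D_def by blast
    qed
    have eps0: "eps (ypos i \<delta> l) = 0" if "l \<in> {1..L}" for l
    proof (cases "l = 1")
      case True then show ?thesis using epsz by (simp add: yp)
    next
      case False
      then have "real l \<ge> 2" using that by auto
      then have "3 * (real l - 1) * D \<ge> 3 * D" using D by (simp add: mult_right_mono)
      then have "ypos i \<delta> l \<notin> {4/3*D..5/3*D}" using D by (auto simp: yp)
      then show ?thesis using eps unfolding D_def by blast
    qed
    fix l assume l: "l \<in> {1..L}"
    show "hval Psi i L \<delta> l = u0 Psi i L \<delta> eps (ypos i \<delta> l) - u0 Psi i L \<delta> eps 0"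
    proof -
      have eqx: "x * \<delta> powr (- alpha i l') = x / \<delta> powr (alpha i l')" for x l'
        by (simp add: powr_minus_divide)
      show ?thesis
        unfolding hval_def u0_def eqx eps0[OF l] epsz
        by (simp add: sum_subtractf[symmetric] right_diff_distrib)
    qed
  next
    define D where "D = \<delta> powr (1 / (2 * real (i 1)))"
    have D: "D > 0" using d by (simp add: D_def)
    have yp: "ypos i \<delta> l = 3 * (real l - 1) * D" for l by (simp add: ypos_def D_def)
    have Q: "\<delta> powr (alpha i l') > 0" for l' using d by simp
    fix l assume l: "l \<in> {2..L}"
    have "hval Psi i L \<delta> l < (\<Sum>l'=1..L. 0)"
      unfolding hval_def
    proof (rule sum_strict_mono)
      fix l' assume l': "l' \<in> {1..L}"
      have "ypos i \<delta> l > 0" using l D by (simp add: yp)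
      then have "- ypos i \<delta> l' / \<delta> powr (alpha i l') < (ypos i \<delta> l - ypos i \<delta> l') / \<delta> powr (alpha i l')"
        using Q[of l'] by (intro divide_strict_right_mono) auto
      from dec[OF hi[OF l'] this] show "\<delta> powr (1 / (2 * real (i l'))) *
        (Psi (i l') ((ypos i \<delta> l - ypos i \<delta> l') / \<delta> powr (alpha i l'))
         - Psi (i l') (- ypos i \<delta> l' / \<delta> powr (alpha i l'))) < 0"
        using d by (simp add: mult_pos_neg)
    qed (use hL in auto)
    then show "hval Psi i L \<delta> l < 0" by simp
  next
    define D where "D = \<delta> powr (1 / (2 * real (i 1)))"
    have D: "D > 0" using d by (simp add: D_def)
    have yp: "ypos i \<delta> l = 3 * (real l - 1) * D" for l by (simp add: ypos_def D_def)
    have Q: "\<delta> powr (alpha i l') > 0" for l' using d by simp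
    fix l assume l: "l \<in> {2..L-1}"
    show "hval Psi i L \<delta> (l + 1) < hval Psi i L \<delta> l"
      unfolding hval_def
    proof (rule sum_strict_mono)
      fix l' assume l': "l' \<in> {1..L}"
      have "ypos i \<delta> l < ypos i \<delta> (l+1)" using l D by (simp add: yp)
      then have "(ypos i \<delta> l - ypos i \<delta> l') / \<delta> powr (alpha i l') < (ypos i \<delta> (l+1) - ypos i \<delta> l') / \<delta> powr (alpha i l')"
        using Q[of l'] by (intro divide_strict_right_mono) auto
      from dec[OF hi[OF l'] this] d show "\<delta> powr (1 / (2 * real (i l'))) *
        (Psi (i l') ((ypos i \<delta> (l + 1) - ypos i \<delta> l') / \<delta> powr (alpha i l'))
         - Psi (i l') (- ypos i \<delta> l' / \<delta> powr (alpha i l')))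
       < \<delta> powr (1 / (2 * real (i l'))) *
        (Psi (i l') ((ypos i \<delta> l - ypos i \<delta> l') / \<delta> powr (alpha i l'))
         - Psi (i l') (- ypos i \<delta> l' / \<delta> powr (alpha i l')))"
        by (intro mult_strict_left_mono) auto
    qed (use hL in auto)
  qed
  define K where "K = (\<Sum>l'=1..L. 2 * Cf (i l') * (3 * real L))"
  have part2: "\<bar>hval Psi i L \<delta> l\<bar> \<le> K * \<delta> powr (1 / (2 * real m * (2 * real m + 1)))"
    if d: "0 < \<delta>" "\<delta> < 1" and l: "l \<in> {1..L}" for \<delta> l
  proof -
    define D where "D = \<delta> powr (1 / (2 * real (i 1)))"
    have yp1: "ypos i \<delta> l - ypos i \<delta> l' = (3 * (real l - real l')) * D" for l'
      by (simp add: ypos_def D_def algebra_simps)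
    have yp2: "- ypos i \<delta> l' = (- 3 * (real l' - 1)) * D" for l'
      by (simp add: ypos_def D_def algebra_simps)
    have "\<bar>hval Psi i L \<delta> l\<bar> \<le> (\<Sum>l'=1..L. \<bar>\<delta> powr (1 / (2 * real (i l'))) *
        (Psi (i l') ((ypos i \<delta> l - ypos i \<delta> l') / \<delta> powr (alpha i l'))
         - Psi (i l') (- ypos i \<delta> l' / \<delta> powr (alpha i l')))\<bar>)"
      unfolding hval_def by (rule sum_abs)
    also have "\<dots> \<le> (\<Sum>l'=1..L. 2 * Cf (i l') * (3 * real L) * \<delta> powr (1 / (2 * real m * (2 * real m + 1))))"
    proof (rule sum_mono)
      fix l' assume l': "l' \<in> {1..L}"
      have k: "0 < i l'" using hi[OF l'] .
      show "\<bar>\<delta> powr (1 / (2 * real (i l'))) *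
        (Psi (i l') ((ypos i \<delta> l - ypos i \<delta> l') / \<delta> powr (alpha i l'))
         - Psi (i l') (- ypos i \<delta> l' / \<delta> powr (alpha i l')))\<bar>
        \<le> 2 * Cf (i l') * (3 * real L) * \<delta> powr (1 / (2 * real m * (2 * real m + 1)))"
        unfolding yp1 yp2 alpha_def D_def
        by (rule term_bound[OF Cf(2)[OF k] Cf(1)[OF k] d _ _ _ i1 k iin[OF l']])
          (use l l' hL in auto)
    qed
    also have "\<dots> = K * \<delta> powr (1 / (2 * real m * (2 * real m + 1)))"
      unfolding K_def by (simp add: sum_distrib_right)
    finally show ?thesis .
  qed
  have part4: "\<exists>C. \<forall>\<^sub>F \<delta> in at_right 0. \<forall>l\<in>{2..L}.
            \<bar>hval Psi i L \<delta> l\<bar> \<le> C * \<delta> powr (1 / (2 * real m * (2 * real m + 1)))"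
  proof -
    have "\<forall>\<^sub>F \<delta> in at_right 0. 0 < \<delta> \<and> \<delta> < (1::real)"
      by (intro eventually_at_rightI[of 0 1]) auto
    then have "\<forall>\<^sub>F \<delta> in at_right 0. \<forall>l\<in>{2..L}.
            \<bar>hval Psi i L \<delta> l\<bar> \<le> K * \<delta> powr (1 / (2 * real m * (2 * real m + 1)))"
      by (rule eventually_mono) (use part2 in auto)
    then show ?thesis by blast
  qed
  show ?thesis
    apply (rule conjI)
     apply (intro allI impI, elim conjE)
     apply (rule part1; assumption)
    apply (rule part4[unfolded m_def])
    done
qed

end
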